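(* Consider the discrete system, depending on a time step $h$, $$\frac{\tilde{x}-x}{h} = a x+ \hat{a} \tilde{x} - \big(bxy+c \tilde{x}\tilde{y}+d x\tilde{y} + e \tilde{x}y\big), \qquad \frac{\tilde{y}-y}{h} = - A y -\hat{A}\tilde{y} + \big(Bxy+C \tilde{x}\tilde{y}+D x\tilde{y} + E \tilde{x}y\big),$$ where the constants $a,\hat a,b,c,d,e,A,\hat A,B,C,D,E$ are independent of $h$ and satisfy $$a+\hat{a} = A + \hat{A} = b+c+d+e = B+C+D+E = 1.$$ Such a system is specified by the list $\{a,b,c,d,e,A,B,C,D,E\}$ (with $\hat a=1-a$, $\hat A=1-A$). The system defines a birational map $\varphi:(x,y)\mapsto(\tilde x,\tilde y)$ (i.e. $\tilde x,\tilde y$ are given explicitly and uniquely as rational functions of $x,y$ (and $h$), and $x,y$ are given explicitly and uniquely as rational functions of $\tilde x,\tilde y$ (and $h$), for generic $h$) if and only if the parameters belong to one of the following cases: (i) $\{a,0,0,d,e,A,0,0,D,E\}$ with $d+e=1=D+E$; (ii) $\{a,0,0,1,0,A,B,0,D,E\}$ with $B+D+E=1$; (iii) $\{a,0,0,0,1,A,0,C,D,E\}$ with $C+D+E=1$; (iv) $\{a,b,0,d,e,A,0,0,0,1\}$ with $b+d+e=1$; (v) $\{a,0,c,d,e,A,0,0,1,0\}$ with $c+d+e=1$; (vi) $\{a,0,c,d,0,A,B,0,D,0\}$ with $c+d=1=B+D$; (vii) $\{a,b,0,0,e,A,0,C,0,E\}$ with $b+e=1=C+E$. In each case $a$ and $A$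 are arbitrary.
   Context: The system is a first-order discretization of the Lotka–Volterra system $\dot x = x(1-y)$, $\dot y = y(x-1)$, obtained by replacing $x\to ax+\hat a\tilde x$, $y\to Ay+\hat A\tilde y$, and $xy$ by a linear combination of $xy,\tilde x\tilde y,x\tilde y,\tilde x y$; here $\tilde x,\tilde y$ denote the values of the variables after one time step $h$. *)

theory Defs
  imports Complex_Main
begin

definition poly3_fun :: "(complex \<Rightarrow> complex \<Rightarrow> complex \<Rightarrow> complex) \<Rightarrow> bool" where
  "poly3_fun f \<longleftrightarrow> (\<exists>n::nat. \<exists>c :: nat \<Rightarrow> nat \<Rightarrow> nat \<Rightarrow> complex.
     \<forall>h u v. f h u v = (\<Sum>i\<le>n. \<Sum>j\<le>n. \<Sum>k\<le>n. c i j k * h ^ i * u ^ j * v ^ k))"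

definition LV_sys :: "real \<Rightarrow> real \<Rightarrow> real \<Rightarrow> real \<Rightarrow> real \<Rightarrow> real \<Rightarrow> real \<Rightarrow> real \<Rightarrow> real \<Rightarrow> real
   \<Rightarrow> complex \<Rightarrow> complex \<Rightarrow> complex \<Rightarrow> complex \<Rightarrow> complex \<Rightarrow> bool" where
  "LV_sys a b c d e A B C D E h x y xt yt \<longleftrightarrow>
     (xt - x) / h = of_real a * x + of_real (1 - a) * xt
        - (of_real b * x * y + of_real c * xt * yt + of_real d * x * yt + of_real e * xt * y)
   \<and> (yt - y) / h = - of_real A * y - of_real (1 - A) * yt
        + (of_real B * x * y + of_real C * xt * yt + of_real D * x * yt + of_real E * xt * y)"

definition generically_rational_solution ::
  "(complex \<Rightarrow> complex \<Rightarrow> complex \<Rightarrow> complex \<Rightarrow> complex \<Rightarrow> bool) \<Rightarrow> bool" where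
  "generically_rational_solution R \<longleftrightarrow>
     (\<exists>N1 N2 Q G. poly3_fun N1 \<and> poly3_fun N2 \<and> poly3_fun Q \<and> poly3_fun G \<and>
        G \<noteq> (\<lambda>_ _ _. 0) \<and>
        (\<forall>h u v. G h u v \<noteq> 0 \<longrightarrow> Q h u v \<noteq> 0 \<and>
           {(s, t). R h u v s t} = {(N1 h u v / Q h u v, N2 h u v / Q h u v)}))"

definition LV_birational :: "real \<Rightarrow> real \<Rightarrow> real \<Rightarrow> real \<Rightarrow> real \<Rightarrow> real \<Rightarrow> real \<Rightarrow> real \<Rightarrow> real \<Rightarrow> real \<Rightarrow> bool" where
  "LV_birational a b c d e A B C D E \<longleftrightarrow>
     generically_rational_solution (\<lambda>h x y xt yt. LV_sys a b c d e A B C D E h x y xt yt)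
   \<and> generically_rational_solution (\<lambda>h xt yt x y. LV_sys a b c d e A B C D E h x y xt yt)"

end

theory Submission
  imports Defs "HOL-Complex_Analysis.Conformal_Mappings"
begin


definition P3 :: "nat \<Rightarrow> (nat \<Rightarrow> nat \<Rightarrow> nat \<Rightarrow> complex) \<Rightarrow> complex \<Rightarrow> complex \<Rightarrow> complex \<Rightarrow> complex" where
  "P3 n c h u v = (\<Sum>i\<le>n. \<Sum>j\<le>n. \<Sum>k\<le>n. c i j k * h ^ i * u ^ j * v ^ k)"

lemma poly3_fun_P3: "poly3_fun f \<longleftrightarrow> (\<exists>n c. f = P3 n c)"
  unfolding poly3_fun_def P3_def by (auto simp: fun_eq_iff)

lemma sum_pad: "(n::nat) \<le> N \<Longrightarrow> (\<Sum>k\<le>N. if k \<le> n then f k else 0) = (\<Sum>k\<le>n. f k)"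
proof -
  assume "n \<le> N"
  have "(\<Sum>k\<le>N. if k \<le> n then f k else 0) = (\<Sum>k\<le>n. if k \<le> n then f k else 0)"
    using \<open>n \<le> N\<close> by (intro sum.mono_neutral_right) auto
  then show ?thesis by simp
qed

lemma if_sum: "(\<Sum>k\<in>A. if P then f k else 0) = (if P then sum f A else 0)"
  by auto

lemma if_mult3: "(if i \<le> n \<and> j \<le> n \<and> k \<le> n then c else 0) * h * u * (v::complex) =
  (if i \<le> n then (if j \<le> n then (if k \<le> n then c * h * u * v else 0) else 0) else 0)"
  by auto

lemma P3_pad: assumes "n \<le> N"
  shows "P3 n c = P3 N (\<lambda>i j k. if i \<le> n \<and> j \<le> n \<and> k \<le> n then c i j k else 0)"
proof (intro ext)
  fix h u v
  have "P3 N (\<lambda>i j k. if i \<le> n \<and> j \<le> n \<and> k \<le> n then c i j k else 0) h u v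
     = (\<Sum>i\<le>N. if i \<le> n then (\<Sum>j\<le>N. if j \<le> n then (\<Sum>k\<le>N. if k \<le> n then c i j k * h ^ i * u ^ j * v ^ k else 0) else 0) else 0)"
    unfolding P3_def if_mult3 by (simp only: if_sum)
  also have "\<dots> = P3 n c h u v"
    unfolding P3_def using assms by (simp add: sum_pad)
  finally show "P3 n c h u v = P3 N (\<lambda>i j k. if i \<le> n \<and> j \<le> n \<and> k \<le> n then c i j k else 0) h u v" by simp
qed

lemma poly3_large: "poly3_fun f \<Longrightarrow> \<exists>n. \<forall>N\<ge>n. \<exists>c. f = P3 N c"
  unfolding poly3_fun_P3 using P3_pad by blast

lemma poly3_add: "poly3_fun f \<Longrightarrow> poly3_fun g \<Longrightarrow> poly3_fun (\<lambda>h u v. f h u v + g h u v)"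
proof -
  assume "poly3_fun f" "poly3_fun g"
  then obtain n m where n: "\<forall>N\<ge>n. \<exists>c. f = P3 N c" and m: "\<forall>N\<ge>m. \<exists>c. g = P3 N c"
    using poly3_large by blast
  obtain c where c: "f = P3 (max n m) c" using n[rule_format, of "max n m"] by auto
  obtain d where d: "g = P3 (max n m) d" using m[rule_format, of "max n m"] by auto
  have "(\<lambda>h u v. f h u v + g h u v) = P3 (max n m) (\<lambda>i j k. c i j k + d i j k)"
    unfolding c d P3_def by (auto simp: fun_eq_iff sum.distrib[symmetric] algebra_simps)
  then show ?thesis unfolding poly3_fun_P3 by blast
qed

lemma poly3_scale: "poly3_fun f \<Longrightarrow> poly3_fun (\<lambda>h u v. a * f h u v)"
proof -
  assume "poly3_fun f"
  then obtain n c where c: "f = P3 n c" unfolding poly3_fun_P3 by blast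
  have "(\<lambda>h u v. a * f h u v) = P3 n (\<lambda>i j k. a * c i j k)"
    unfolding c P3_def by (auto simp: fun_eq_iff sum_distrib_left algebra_simps)
  then show ?thesis unfolding poly3_fun_P3 by blast
qed

lemma poly3_const: "poly3_fun (\<lambda>h u v. a)"
proof -
  have "(\<lambda>h u v. a) = P3 0 (\<lambda>i j k. a)" unfolding P3_def by auto
  then show ?thesis unfolding poly3_fun_P3 by blast
qed

lemma poly3_swap12: "poly3_fun f \<Longrightarrow> poly3_fun (\<lambda>h u v. f u h v)"
proof -
  assume "poly3_fun f"
  then obtain n c where c: "f = P3 n c" unfolding poly3_fun_P3 by blast
  have "\<And>h u v. P3 n (\<lambda>i j k. c j i k) h u v = P3 n c u h v"
    unfolding P3_def by (subst sum.swap) (simp add: mult_ac)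
  then have "(\<lambda>h u v. f u h v) = P3 n (\<lambda>i j k. c j i k)"
    unfolding c by (simp add: fun_eq_iff)
  then show ?thesis unfolding poly3_fun_P3 by blast
qed

lemma poly3_swap23: "poly3_fun f \<Longrightarrow> poly3_fun (\<lambda>h u v. f h v u)"
proof -
  assume "poly3_fun f"
  then obtain n c where c: "f = P3 n c" unfolding poly3_fun_P3 by blast
  have "\<And>h u v. P3 n (\<lambda>i j k. c i k j) h u v = P3 n c h v u"
    unfolding P3_def by (rule sum.cong[OF refl], subst sum.swap) (simp add: mult_ac)
  then have "(\<lambda>h u v. f h v u) = P3 n (\<lambda>i j k. c i k j)"
    unfolding c by (simp add: fun_eq_iff)
  then show ?thesis unfolding poly3_fun_P3 by blast
qed

lemma poly3_negh: "poly3_fun f \<Longrightarrow> poly3_fun (\<lambda>h u v. f (-h) u v)"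
proof -
  assume "poly3_fun f"
  then obtain n c where c: "f = P3 n c" unfolding poly3_fun_P3 by blast
  have "(\<lambda>h u v. f (-h) u v) = P3 n (\<lambda>i j k. c i j k * (if even i then 1 else -1))"
    unfolding c P3_def by (intro ext sum.cong refl) (auto simp: power_minus_even power_minus_odd)
  then show ?thesis unfolding poly3_fun_P3 by blast
qed

lemma poly3_multh: "poly3_fun f \<Longrightarrow> poly3_fun (\<lambda>h u v. h * f h u v)"
proof -
  assume "poly3_fun f"
  then obtain n c where c: "f = P3 n c" unfolding poly3_fun_P3 by blast
  define cp where "cp = (\<lambda>i j k. if i \<le> n \<and> j \<le> n \<and> k \<le> n then c i j k else 0)"
  have f: "f = P3 (Suc n) cp" unfolding c cp_def by (rule P3_pad) simp
  define d where "d = (\<lambda>i j k. case i of 0 \<Rightarrow> 0 | Suc i' \<Rightarrow> cp i' j k)"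
  have "(\<lambda>h u v. h * f h u v) = P3 (Suc n) d"
  proof (intro ext)
    fix h u v
    have "h * f h u v = (\<Sum>i\<le>Suc n. \<Sum>j\<le>Suc n. \<Sum>k\<le>Suc n. cp i j k * h ^ Suc i * u ^ j * v ^ k)"
      unfolding f P3_def by (simp add: sum_distrib_left algebra_simps)
    also have "\<dots> = (\<Sum>i\<le>n. \<Sum>j\<le>Suc n. \<Sum>k\<le>Suc n. cp i j k * h ^ Suc i * u ^ j * v ^ k)"
      by (simp add: cp_def)
    also have "\<dots> = P3 (Suc n) d h u v"
      unfolding P3_def by (subst sum.atMost_Suc_shift) (simp add: d_def)
    finally show "h * f h u v = P3 (Suc n) d h u v" .
  qed
  then show ?thesis unfolding poly3_fun_P3 by blast
qed

lemma poly3_multu: "poly3_fun f \<Longrightarrow> poly3_fun (\<lambda>h u v. u * f h u v)"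
  using poly3_swap12[OF poly3_multh[OF poly3_swap12]] by simp

lemma poly3_multv: "poly3_fun f \<Longrightarrow> poly3_fun (\<lambda>h u v. v * f h u v)"
  using poly3_swap23[OF poly3_multu[OF poly3_swap23]] by simp

lemma poly3_mono: "poly3_fun f \<Longrightarrow> poly3_fun (\<lambda>h u v. h ^ i * u ^ j * v ^ k * f h u v)"
proof -
  assume f: "poly3_fun f"
  have "poly3_fun (\<lambda>h u v. v ^ k * f h u v)" for k
    by (induction k) (use f in \<open>auto simp: mult.assoc dest: poly3_multv\<close>)
  then have "poly3_fun (\<lambda>h u v. u ^ j * (v ^ k * f h u v))" for j
    by (induction j) (auto simp: mult.assoc dest: poly3_multu)
  then have "poly3_fun (\<lambda>h u v. h ^ i * (u ^ j * (v ^ k * f h u v)))" for i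
    by (induction i) (auto simp: mult.assoc dest: poly3_multh)
  then show ?thesis by (simp add: mult.assoc)
qed

lemma poly3_sum: "finite A \<Longrightarrow> (\<And>x. x \<in> A \<Longrightarrow> poly3_fun (F x)) \<Longrightarrow> poly3_fun (\<lambda>h u v. \<Sum>x\<in>A. F x h u v)"
proof (induction A rule: finite_induct)
  case empty then show ?case using poly3_const[of 0] by simp
next
  case (insert x A) then show ?case by (simp add: poly3_add)
qed

lemma poly3_mult: "poly3_fun f \<Longrightarrow> poly3_fun g \<Longrightarrow> poly3_fun (\<lambda>h u v. f h u v * g h u v)"
proof -
  assume f: "poly3_fun f" and g: "poly3_fun g"
  then obtain n c where c: "f = P3 n c" unfolding poly3_fun_P3 by blast
  have eq: "(\<lambda>h u v. f h u v * g h u v) = (\<lambda>h u v. \<Sum>i\<le>n. \<Sum>j\<le>n. \<Sum>k\<le>n. c i j k * (h ^ i * u ^ j * v ^ k * g h u v))"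
    unfolding c P3_def by (simp add: fun_eq_iff sum_distrib_right mult.assoc)
  show ?thesis unfolding eq
    by (intro poly3_sum poly3_scale poly3_mono g finite_atMost)
qed

lemma poly3_h: "poly3_fun (\<lambda>h u v. h)"
  using poly3_multh[OF poly3_const[of 1]] by simp
lemma poly3_u: "poly3_fun (\<lambda>h u v. u)"
  using poly3_multu[OF poly3_const[of 1]] by simp
lemma poly3_v: "poly3_fun (\<lambda>h u v. v)"
  using poly3_multv[OF poly3_const[of 1]] by simp
lemma poly3_diff: "poly3_fun f \<Longrightarrow> poly3_fun g \<Longrightarrow> poly3_fun (\<lambda>h u v. f h u v - g h u v)"
  using poly3_add[OF _ poly3_scale[of g "-1"]] by simp
lemma poly3_uminus: "poly3_fun f \<Longrightarrow> poly3_fun (\<lambda>h u v. - f h u v)"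
  using poly3_scale[of f "-1"] by simp
lemma poly3_power: "poly3_fun f \<Longrightarrow> poly3_fun (\<lambda>h u v. f h u v ^ n)"
  by (induction n) (auto intro: poly3_mult poly3_const)

lemmas poly3_intros = poly3_add poly3_diff poly3_uminus poly3_mult poly3_power poly3_const
  poly3_h poly3_u poly3_v

definition ent3 :: "(complex \<Rightarrow> complex \<Rightarrow> complex \<Rightarrow> complex) \<Rightarrow> bool" where
  "ent3 f \<longleftrightarrow> (\<forall>p1 p2 p3 q1 q2 q3. (\<lambda>t. f (p1+t*q1) (p2+t*q2) (p3+t*q3)) holomorphic_on UNIV)"

lemma poly3_ent3: "poly3_fun f \<Longrightarrow> ent3 f"
  unfolding poly3_fun_P3 ent3_def P3_def by (auto intro!: holomorphic_intros)

lemma ent3_prod: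
  assumes F: "ent3 F" and G: "ent3 G" and Fa: "F a1 a2 a3 \<noteq> 0" and Gb: "G b1 b2 b3 \<noteq> 0"
  shows "\<exists>h u v. F h u v \<noteq> 0 \<and> G h u v \<noteq> 0"
proof (rule ccontr)
  assume nz: "\<not> ?thesis"
  define \<phi> where "\<phi> = (\<lambda>t. F (a1+t*(b1-a1)) (a2+t*(b2-a2)) (a3+t*(b3-a3)))"
  define \<psi> where "\<psi> = (\<lambda>t. G (a1+t*(b1-a1)) (a2+t*(b2-a2)) (a3+t*(b3-a3)))"
  have hphi: "\<phi> holomorphic_on UNIV" using F unfolding ent3_def \<phi>_def by blast
  have hpsi: "\<psi> holomorphic_on UNIV" using G unfolding ent3_def \<psi>_def by blast
  have op: "open {t. \<phi> t \<noteq> (\<lambda>_. 0) t}"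
    by (rule open_Collect_neq) (use hphi holomorphic_on_imp_continuous_on in auto)
  have ne: "{t. \<phi> t \<noteq> (\<lambda>_. 0) t} \<noteq> {}" using Fa unfolding \<phi>_def by (auto intro!: exI[of _ 0])
  have "\<psi> 1 = (\<lambda>_. 0) 1"
    by (rule analytic_continuation_open[OF op open_UNIV ne connected_UNIV subset_UNIV hpsi])
       (use nz in \<open>auto simp: \<phi>_def \<psi>_def\<close>)
  then show False using Gb by (simp add: \<psi>_def)
qed

lemma poly3_prod: "poly3_fun F \<Longrightarrow> poly3_fun G \<Longrightarrow> F \<noteq> (\<lambda>_ _ _. 0) \<Longrightarrow> G \<noteq> (\<lambda>_ _ _. 0)
   \<Longrightarrow> \<exists>h u v. F h u v \<noteq> 0 \<and> G h u v \<noteq> 0"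
  by (metis ent3_prod poly3_ent3)

lemma exists_nonzero_near0:
  fixes f :: "complex \<Rightarrow> complex"
  assumes "isCont f 0" "f 0 \<noteq> 0" shows "\<exists>h. h \<noteq> 0 \<and> f h \<noteq> 0"
proof (rule ccontr)
  assume "\<not> ?thesis"
  then have "\<forall>\<^sub>F x in at 0. f x = 0" by (auto simp: eventually_at intro!: exI[of _ 1])
  then have "f \<midarrow>0\<rightarrow> 0" by (rule tendsto_eventually)
  moreover have "f \<midarrow>0\<rightarrow> f 0" using assms(1) by (simp add: isCont_def)
  ultimately have "f 0 = 0" using LIM_unique by blast
  then show False using assms(2) by simp
qed




abbreviation GR where "GR \<equiv> generically_rational_solution"

definition gsys :: "complex \<Rightarrow> complex \<Rightarrow> complex \<Rightarrow> complex \<Rightarrow> complex \<Rightarrow> complex \<Rightarrow>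
   complex \<Rightarrow> complex \<Rightarrow> complex \<Rightarrow> complex \<Rightarrow> complex \<Rightarrow> complex \<Rightarrow>
   complex \<Rightarrow> complex \<Rightarrow> complex \<Rightarrow> complex \<Rightarrow> complex \<Rightarrow> bool" where
  "gsys a1 a2 b c d e A1 A2 B C D E h x y s t \<longleftrightarrow>
     s - x = h * (a1 * x + a2 * s + b * x * y + c * s * t + d * x * t + e * s * y) \<and>
     t - y = h * (A1 * y + A2 * t + B * x * y + C * s * t + D * x * t + E * s * y)"

lemma gsys_swap: "gsys a1 a2 b c d e A1 A2 B C D E h x y s t \<longleftrightarrow> gsys A1 A2 B C E D a1 a2 b c e d h y x t s"
  unfolding gsys_def by (auto simp: algebra_simps)

lemma gsys_rev: "gsys a1 a2 b c d e A1 A2 B C D E h x y s t \<longleftrightarrow> gsys a2 a1 c b e d A2 A1 C B E D (-h) s t x y"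
  unfolding gsys_def by (auto simp: algebra_simps)

lemma gsys_R: "gsys a1 a2 b c d e A1 A2 B C D E h x y s t \<longleftrightarrow>
   (s * (1 - h * a2 - h * e * y) + (-h * c) * s * t + (-h * d * x) * t = x * (1 + h * a1 + h * b * y) \<and>
    t * (1 - h * A2 - h * D * x) + (-h * C) * s * t + (-h * E * y) * s = y * (1 + h * A1 + h * B * x))"
  unfolding gsys_def by (auto simp: algebra_simps)

lemma LV_gsys:
  assumes "h \<noteq> 0"
  shows "LV_sys a b c d e A B C D E h x y xt yt \<longleftrightarrow>
    gsys (of_real a) (of_real (1-a)) (- of_real b) (- of_real c) (- of_real d) (- of_real e)
         (- of_real A) (- of_real (1-A)) (of_real B) (of_real C) (of_real D) (of_real E) h x y xt yt"
proof -
  have *: "\<And>p q::complex. p / h = q \<longleftrightarrow> p = h * q" using assms by (auto simp: field_simps)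
  show ?thesis unfolding LV_sys_def gsys_def * by (simp add: algebra_simps)
qed

lemma gr_cong:
  assumes eq: "\<And>h u v s t. h \<noteq> 0 \<Longrightarrow> (R h u v s t \<longleftrightarrow> R' h u v s t)" and gr: "GR R"
  shows "GR R'"
proof -
  obtain N1 N2 Q G where p: "poly3_fun N1" "poly3_fun N2" "poly3_fun Q" "poly3_fun G"
    and G0: "G \<noteq> (\<lambda>_ _ _. 0)"
    and H: "\<And>h u v. G h u v \<noteq> 0 \<Longrightarrow> Q h u v \<noteq> 0 \<and> {(s, t). R h u v s t} = {(N1 h u v / Q h u v, N2 h u v / Q h u v)}"
    using gr unfolding generically_rational_solution_def by blast
  have h0: "(\<lambda>h u v. h) \<noteq> (\<lambda>_ _ _. 0::complex)" by (metis one_neq_zero)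
  obtain h u v where "h \<noteq> 0" "G h u v \<noteq> 0" using poly3_prod[OF poly3_h p(4) h0 G0] by blast
  then have G'0: "(\<lambda>h u v. h * G h u v) \<noteq> (\<lambda>_ _ _. 0)" by (metis mult_eq_0_iff)
  have "poly3_fun (\<lambda>h u v. h * G h u v)" by (intro poly3_mult poly3_h p(4))
  moreover have "Q h u v \<noteq> 0 \<and> {(s, t). R' h u v s t} = {(N1 h u v / Q h u v, N2 h u v / Q h u v)}"
    if "h * G h u v \<noteq> 0" for h u v
  proof -
    have "h \<noteq> 0" "G h u v \<noteq> 0" using that by auto
    then have "{(s, t). R' h u v s t} = {(s, t). R h u v s t}" using eq by auto
    then show ?thesis using H[OF \<open>G h u v \<noteq> 0\<close>] by simp
  qed
  ultimately show ?thesis unfolding generically_rational_solution_def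
    using p G'0 by blast
qed

lemma gr_swap:
  assumes gr: "GR R" shows "GR (\<lambda>h u v s t. R h v u t s)"
proof -
  obtain N1 N2 Q G where p: "poly3_fun N1" "poly3_fun N2" "poly3_fun Q" "poly3_fun G"
    and G0: "G \<noteq> (\<lambda>_ _ _. 0)"
    and H: "\<And>h u v. G h u v \<noteq> 0 \<Longrightarrow> Q h u v \<noteq> 0 \<and> {(s, t). R h u v s t} = {(N1 h u v / Q h u v, N2 h u v / Q h u v)}"
    using gr unfolding generically_rational_solution_def by blast
  have p': "poly3_fun (\<lambda>h u v. N2 h v u)" "poly3_fun (\<lambda>h u v. N1 h v u)" "poly3_fun (\<lambda>h u v. Q h v u)"
     "poly3_fun (\<lambda>h u v. G h v u)" using p by (auto intro: poly3_swap23)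
  have G'0: "(\<lambda>h u v. G h v u) \<noteq> (\<lambda>_ _ _. 0)"
  proof
    assume "(\<lambda>h u v. G h v u) = (\<lambda>_ _ _. 0)"
    then have "G h u v = 0" for h u v by (metis)
    then have "G = (\<lambda>_ _ _. 0)" by (intro ext)
    then show False using G0 by simp
  qed
  have "Q h v u \<noteq> 0 \<and> {(s, t). R h v u t s} = {(N2 h v u / Q h v u, N1 h v u / Q h v u)}"
    if "G h v u \<noteq> 0" for h u v
    using H[OF that] by (auto simp: set_eq_iff)
  then show ?thesis unfolding generically_rational_solution_def
    using p' G'0 by blast
qed

lemma gr_negh:
  assumes gr: "GR R" shows "GR (\<lambda>h u v s t. R (-h) u v s t)"
proof -
  obtain N1 N2 Q G where p: "poly3_fun N1" "poly3_fun N2" "poly3_fun Q" "poly3_fun G"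
    and G0: "G \<noteq> (\<lambda>_ _ _. 0)"
    and H: "\<And>h u v. G h u v \<noteq> 0 \<Longrightarrow> Q h u v \<noteq> 0 \<and> {(s, t). R h u v s t} = {(N1 h u v / Q h u v, N2 h u v / Q h u v)}"
    using gr unfolding generically_rational_solution_def by blast
  have p': "poly3_fun (\<lambda>h u v. N1 (-h) u v)" "poly3_fun (\<lambda>h u v. N2 (-h) u v)" "poly3_fun (\<lambda>h u v. Q (-h) u v)"
     "poly3_fun (\<lambda>h u v. G (-h) u v)" using p by (auto intro: poly3_negh)
  have G'0: "(\<lambda>h u v. G (-h) u v) \<noteq> (\<lambda>_ _ _. 0)"
  proof
    assume "(\<lambda>h u v. G (-h) u v) = (\<lambda>_ _ _. 0)"
    then have "G (-h) u v = 0" for h u v by (metis)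
    then have "G h u v = 0" for h u v by (metis minus_minus)
    then have "G = (\<lambda>_ _ _. 0)" by (intro ext)
    then show False using G0 by simp
  qed
  have "Q (-h) u v \<noteq> 0 \<and> {(s, t). R (-h) u v s t} = {(N1 (-h) u v / Q (-h) u v, N2 (-h) u v / Q (-h) u v)}"
    if "G (-h) u v \<noteq> 0" for h u v
    using H[OF that] by auto
  then show ?thesis unfolding generically_rational_solution_def
    using p' G'0 by blast
qed

lemma gr_negh_iff: "GR (\<lambda>h u v s t. R (-h) u v s t) \<longleftrightarrow> GR R"
  using gr_negh[of R] gr_negh[of "\<lambda>h u v s t. R (-h) u v s t"] by auto

lemma gr_swap_iff: "GR (\<lambda>h u v s t. R h v u t s) \<longleftrightarrow> GR R"
  using gr_swap[of R] gr_swap[of "\<lambda>h u v s t. R h v u t s"] by auto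

lemma second_sol:
  fixes p1 q1 r1 k1 p2 q2 r2 k2 s t :: complex
  defines "lm \<equiv> q2 * p1 - q1 * r2" and "mu \<equiv> q2 * r1 - q1 * p2" and "nu \<equiv> q2 * k1 - q1 * k2"
  defines "al \<equiv> - lm * q2" and "be \<equiv> nu * q2 - lm * p2 + r2 * mu" and "ga \<equiv> nu * p2 - k2 * mu"
  assumes R1: "s * p1 + q1 * s * t + r1 * t = k1" and R2: "t * p2 + q2 * s * t + r2 * s = k2"
    and q2: "q2 \<noteq> 0" and mu: "mu \<noteq> 0" and al: "al \<noteq> 0" and De: "be^2 - 4 * al * ga \<noteq> 0"
  shows "\<exists>s' t'. s' * p1 + q1 * s' * t' + r1 * t' = k1 \<and> t' * p2 + q2 * s' * t' + r2 * s' = k2 \<and> s' \<noteq> s"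
proof -
  have idL: "q2 * (s * p1 + q1 * s * t + r1 * t - k1) - q1 * (t * p2 + q2 * s * t + r2 * s - k2) = lm * s + mu * t - nu" for s t
    unfolding lm_def mu_def nu_def by (simp add: algebra_simps)
  have idQ: "mu * (t * p2 + q2 * s * t + r2 * s - k2) = (al * s^2 + be * s + ga) + (p2 + q2 * s) * (lm * s + mu * t - nu)" for s t
    unfolding al_def be_def ga_def by (simp add: algebra_simps power2_eq_square)
  have L: "lm * s + mu * t - nu = 0" using idL[where s=s and t=t] R1 R2 by simp
  have Q: "al * s^2 + be * s + ga = 0" using idQ[where s=s and t=t] R2 L by simp
  define s' where "s' = - be/al - s"
  define t' where "t' = (nu - lm * s')/mu"
  have Q': "al * s'^2 + be * s' + ga = 0"
  proof -
    have "al * s'^2 + be * s' + ga = al * s^2 + be * s + ga"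
      unfolding s'_def using al by (simp add: field_simps power2_eq_square)
    then show ?thesis using Q by simp
  qed
  have L': "lm * s' + mu * t' - nu = 0" unfolding t'_def using mu by (simp add: field_simps)
  have R2': "t' * p2 + q2 * s' * t' + r2 * s' = k2"
    using idQ[where s=s' and t=t'] Q' L' mu by simp
  have R1': "s' * p1 + q1 * s' * t' + r1 * t' = k1"
    using idL[where s=s' and t=t'] L' R2' q2 by simp
  have "s' \<noteq> s"
  proof
    assume "s' = s"
    have e: "al * s' = - be - al * s" unfolding s'_def using al by (simp add: field_simps)
    then have "2 * al * s + be = 0" using \<open>s' = s\<close> by algebra
    then have "(2 * al * s + be)^2 - 4 * al * (al * s^2 + be * s + ga) = 0" using Q by simp
    moreover have "(2 * al * s + be)^2 - 4 * al * (al * s^2 + be * s + ga) = be^2 - 4 * al * ga"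
      by (simp add: algebra_simps power2_eq_square)
    ultimately show False using De by simp
  qed
  then show ?thesis using R1' R2' by blast
qed

lemma lin1:
  fixes p1 r1 k1 p2 r2 k2 s t :: complex
  assumes det: "p1 * p2 - r1 * r2 \<noteq> 0"
  shows "(s * p1 + r1 * t = k1 \<and> t * p2 + r2 * s = k2) \<longleftrightarrow>
     (s = (k1 * p2 - r1 * k2)/(p1 * p2 - r1 * r2) \<and> t = (p1 * k2 - r2 * k1)/(p1 * p2 - r1 * r2))"
proof
  assume H: "s * p1 + r1 * t = k1 \<and> t * p2 + r2 * s = k2"
  have "s * (p1 * p2 - r1 * r2) = k1 * p2 - r1 * k2" using H by (auto simp: algebra_simps)
  moreover have "t * (p1 * p2 - r1 * r2) = p1 * k2 - r2 * k1" using H by (auto simp: algebra_simps)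
  ultimately show "s = (k1 * p2 - r1 * k2)/(p1 * p2 - r1 * r2) \<and> t = (p1 * k2 - r2 * k1)/(p1 * p2 - r1 * r2)"
    using det by (simp add: field_simps)
next
  assume H: "s = (k1 * p2 - r1 * k2)/(p1 * p2 - r1 * r2) \<and> t = (p1 * k2 - r2 * k1)/(p1 * p2 - r1 * r2)"
  then have "s * (p1 * p2 - r1 * r2) = k1 * p2 - r1 * k2" "t * (p1 * p2 - r1 * r2) = p1 * k2 - r2 * k1"
    using det by simp_all
  note e = this
  have "(s * p1 + r1 * t - k1) * (p1 * p2 - r1 * r2) = p1 * (s * (p1 * p2 - r1 * r2)) + r1 * (t * (p1 * p2 - r1 * r2)) - k1 * (p1 * p2 - r1 * r2)"
    by (simp add: algebra_simps)
  also have "\<dots> = p1 * (k1 * p2 - r1 * k2) + r1 * (p1 * k2 - r2 * k1) - k1 * (p1 * p2 - r1 * r2)" by (simp only: e)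
  also have "\<dots> = 0" by (simp add: algebra_simps)
  finally have 1: "(s * p1 + r1 * t - k1) * (p1 * p2 - r1 * r2) = 0" .
  have "(t * p2 + r2 * s - k2) * (p1 * p2 - r1 * r2) = p2 * (t * (p1 * p2 - r1 * r2)) + r2 * (s * (p1 * p2 - r1 * r2)) - k2 * (p1 * p2 - r1 * r2)"
    by (simp add: algebra_simps)
  also have "\<dots> = p2 * (p1 * k2 - r2 * k1) + r2 * (k1 * p2 - r1 * k2) - k2 * (p1 * p2 - r1 * r2)" by (simp only: e)
  also have "\<dots> = 0" by (simp add: algebra_simps)
  finally have 2: "(t * p2 + r2 * s - k2) * (p1 * p2 - r1 * r2) = 0" .
  from 1 2 have "s * p1 + r1 * t - k1 = 0 \<and> t * p2 + r2 * s - k2 = 0" using det by simp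
  then show "s * p1 + r1 * t = k1 \<and> t * p2 + r2 * s = k2" by simp
qed




lemma lin2:
  fixes p1 q2 k1 p2 r2 k2 s t :: complex
  assumes p1: "p1 \<noteq> 0" and M: "p1 * p2 + q2 * k1 \<noteq> 0"
  shows "(s * p1 = k1 \<and> t * p2 + q2 * s * t + r2 * s = k2) \<longleftrightarrow>
     (s = (k1 * (p1 * p2 + q2 * k1))/(p1 * (p1 * p2 + q2 * k1)) \<and> t = (p1 * (k2 * p1 - r2 * k1))/(p1 * (p1 * p2 + q2 * k1)))"
proof -
  have key: "(t * p2 + q2 * s * t + r2 * s - k2) * p1 = t * (p1 * p2 + q2 * k1) + r2 * k1 - k2 * p1" if "s * p1 = k1" for s t
  proof -
    have "(t * p2 + q2 * s * t + r2 * s - k2) * p1 = t * p2 * p1 + q2 * t * (s * p1) + r2 * (s * p1) - k2 * p1"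
      by (simp add: algebra_simps)
    also have "\<dots> = t * (p1 * p2 + q2 * k1) + r2 * k1 - k2 * p1" using that by (simp add: algebra_simps)
    finally show ?thesis .
  qed
  have e1: "(k1 * (p1 * p2 + q2 * k1))/(p1 * (p1 * p2 + q2 * k1)) = k1/p1" using M by simp
  have e2: "(p1 * (k2 * p1 - r2 * k1))/(p1 * (p1 * p2 + q2 * k1)) = (k2 * p1 - r2 * k1)/(p1 * p2 + q2 * k1)" using p1 by simp
  show ?thesis unfolding e1 e2
  proof
    assume H: "s * p1 = k1 \<and> t * p2 + q2 * s * t + r2 * s = k2"
    then have "t * (p1 * p2 + q2 * k1) + r2 * k1 = k2 * p1" using key[of s t] by simp
    then have "t * (p1 * p2 + q2 * k1) = k2 * p1 - r2 * k1" by (simp add: eq_diff_eq)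
    then show "s = k1/p1 \<and> t = (k2 * p1 - r2 * k1)/(p1 * p2 + q2 * k1)"
      using H p1 M by (simp add: field_simps)
  next
    assume H: "s = k1/p1 \<and> t = (k2 * p1 - r2 * k1)/(p1 * p2 + q2 * k1)"
    then have sp: "s * p1 = k1" using p1 by simp
    have "t * (p1 * p2 + q2 * k1) = k2 * p1 - r2 * k1" using H M by simp
    then have "(t * p2 + q2 * s * t + r2 * s - k2) * p1 = 0" using key[OF sp] by simp
    then show "s * p1 = k1 \<and> t * p2 + q2 * s * t + r2 * s = k2" using sp p1 by simp
  qed
qed

locale gpar =
  fixes a1 a2 b c d e A1 A2 B C D E :: complex
begin

definition "p1 h u (v::complex) = 1 - h * a2 - h * e * v"
definition "q1 h (u::complex) (v::complex) = - h * c"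
definition "r1 h u (v::complex) = - h * d * u"
definition "k1 h u v = u * (1 + h * a1 + h * b * v)"
definition "p2 h u (v::complex) = 1 - h * A2 - h * D * u"
definition "q2 h (u::complex) (v::complex) = - h * C"
definition "r2 h (u::complex) v = - h * E * v"
definition "k2 h u v = v * (1 + h * A1 + h * B * u)"

lemmas cdefs = p1_def q1_def r1_def k1_def p2_def q2_def r2_def k2_def

definition "lm h u v = q2 h u v * p1 h u v - q1 h u v * r2 h u v"
definition "mu h u v = q2 h u v * r1 h u v - q1 h u v * p2 h u v"
definition "nu h u v = q2 h u v * k1 h u v - q1 h u v * k2 h u v"
definition "al h u v = - lm h u v * q2 h u v"
definition "be h u v = nu h u v * q2 h u v - lm h u v * p2 h u v + r2 h u v * mu h u v"
definition "ga h u v = nu h u v * p2 h u v - k2 h u v * mu h u v"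
definition "Dl h u v = (be h u v)^2 - 4 * al h u v * ga h u v"
definition "PP h u v = h * mu h u v * al h u v * Dl h u v"

lemma gsys_R': "gsys a1 a2 b c d e A1 A2 B C D E h u v s t \<longleftrightarrow>
   (s * p1 h u v + q1 h u v * s * t + r1 h u v * t = k1 h u v \<and>
    t * p2 h u v + q2 h u v * s * t + r2 h u v * s = k2 h u v)"
  unfolding gsys_R cdefs by simp

lemma ent3_PP: "ent3 PP"
  unfolding ent3_def PP_def Dl_def al_def be_def ga_def lm_def mu_def nu_def cdefs
  by (auto intro!: holomorphic_intros)

lemma PP_nonzero:
  assumes C: "C \<noteq> 0" and cd: "c \<noteq> 0 \<or> d \<noteq> 0"
  shows "\<exists>h u v. PP h u v \<noteq> 0"
proof (cases "c = 0")
  case False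
  obtain h where h: "h \<noteq> 0" "(1 - h * a2) * (1 - h * A2) \<noteq> 0"
    using exists_nonzero_near0[of "\<lambda>h. (1 - h * a2) * (1 - h * A2)"] by (auto intro!: continuous_intros)
  have m: "mu h 0 0 = h * c * (1 - h * A2)" unfolding mu_def cdefs by (simp add: algebra_simps)
  have a: "al h 0 0 = - (h * C * (h * C * (1 - h * a2)))" unfolding al_def lm_def cdefs by (simp add: algebra_simps)
  have b: "be h 0 0 = h * C * (1 - h * a2) * (1 - h * A2)" unfolding be_def lm_def nu_def mu_def cdefs by (simp add: algebra_simps)
  have g: "ga h 0 0 = 0" unfolding ga_def nu_def mu_def cdefs by (simp add: algebra_simps)
  have "PP h 0 0 \<noteq> 0" unfolding PP_def Dl_def m a b g using h C False by simp
  then show ?thesis by blast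
next
  case True
  then have d: "d \<noteq> 0" using cd by simp
  define f where "f = (\<lambda>h. (1 - h * a2) * (h * C * (1 + h * a1) - (1 - h * a2) * (1 - h * A2 - h * D)))"
  obtain h where h: "h \<noteq> 0" "f h \<noteq> 0"
    using exists_nonzero_near0[of f] unfolding f_def by (auto intro!: continuous_intros)
  have m: "mu h 1 0 = h * h * C * d" unfolding mu_def cdefs using True by (simp add: algebra_simps)
  have a: "al h 1 0 = - (h * C * (h * C * (1 - h * a2)))" unfolding al_def lm_def cdefs using True by (simp add: algebra_simps)
  have Dl: "Dl h 1 0 = (h * C)^2 * (h * C * (1 + h * a1) - (1 - h * a2) * (1 - h * A2 - h * D))^2"
    unfolding Dl_def be_def ga_def al_def lm_def nu_def mu_def cdefs using True
    by (simp add: algebra_simps power2_eq_square)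
  have "PP h 1 0 \<noteq> 0" unfolding PP_def m a Dl using h C d by (simp add: f_def)
  then show ?thesis by blast
qed

lemma fwd_fail:
  assumes eq: "\<And>h u v s t. h \<noteq> 0 \<Longrightarrow> (R h u v s t \<longleftrightarrow> gsys a1 a2 b c d e A1 A2 B C D E h u v s t)"
    and C: "C \<noteq> 0" and cd: "c \<noteq> 0 \<or> d \<noteq> 0"
  shows "\<not> GR R"
proof
  assume "GR R"
  then obtain N1 N2 Q G where p: "poly3_fun N1" "poly3_fun N2" "poly3_fun Q" "poly3_fun G"
    and G0: "G \<noteq> (\<lambda>_ _ _. 0)"
    and H: "\<And>h u v. G h u v \<noteq> 0 \<Longrightarrow> Q h u v \<noteq> 0 \<and> {(s, t). R h u v s t} = {(N1 h u v / Q h u v, N2 h u v / Q h u v)}"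
    unfolding generically_rational_solution_def by blast
  obtain a1' a2' a3' where Ga: "G a1' a2' a3' \<noteq> 0" using G0 by (meson ext)
  obtain b1 b2 b3 where Pb: "PP b1 b2 b3 \<noteq> 0" using PP_nonzero[OF C cd] by blast
  obtain h u v where G1: "G h u v \<noteq> 0" and P1: "PP h u v \<noteq> 0"
    using ent3_prod[OF poly3_ent3[OF p(4)] ent3_PP Ga Pb] by blast
  have h: "h \<noteq> 0" and mu: "mu h u v \<noteq> 0" and al: "al h u v \<noteq> 0" and De: "Dl h u v \<noteq> 0"
    using P1 unfolding PP_def by auto
  have q2: "q2 h u v \<noteq> 0" unfolding q2_def using h C by simp
  define s0 where "s0 = N1 h u v / Q h u v"
  define t0 where "t0 = N2 h u v / Q h u v"
  have set: "{(s, t). R h u v s t} = {(s0, t0)}" using H[OF G1] unfolding s0_def t0_def by simp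
  then have "R h u v s0 t0" by auto
  then have "gsys a1 a2 b c d e A1 A2 B C D E h u v s0 t0" using eq[OF h] by simp
  then have R12: "s0 * p1 h u v + q1 h u v * s0 * t0 + r1 h u v * t0 = k1 h u v"
     "t0 * p2 h u v + q2 h u v * s0 * t0 + r2 h u v * s0 = k2 h u v" unfolding gsys_R' by auto
  obtain s' t' where S': "s' * p1 h u v + q1 h u v * s' * t' + r1 h u v * t' = k1 h u v"
     "t' * p2 h u v + q2 h u v * s' * t' + r2 h u v * s' = k2 h u v" "s' \<noteq> s0"
    using second_sol[OF R12 q2] mu al De
    unfolding Dl_def al_def be_def ga_def lm_def mu_def nu_def by blast
  then have "gsys a1 a2 b c d e A1 A2 B C D E h u v s' t'" unfolding gsys_R' by auto
  then have "R h u v s' t'" using eq[OF h] by simp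
  then have "(s', t') \<in> {(s0, t0)}" using set by blast
  then show False using S'(3) by simp
qed

lemma gnz_near: "\<exists>h. h \<noteq> 0 \<and> (1 - h * a2) * (1 - h * A2) \<noteq> 0"
  using exists_nonzero_near0[of "\<lambda>h. (1 - h * a2) * (1 - h * A2)"] by (auto intro!: continuous_intros)

lemma poly3_cdefs: "poly3_fun p1" "poly3_fun q1" "poly3_fun r1" "poly3_fun k1"
  "poly3_fun p2" "poly3_fun q2" "poly3_fun r2" "poly3_fun k2"
  unfolding cdefs by (intro poly3_intros)+

lemma fwd_ok1:
  assumes eq: "\<And>h u v s t. h \<noteq> 0 \<Longrightarrow> (R h u v s t \<longleftrightarrow> gsys a1 a2 b c d e A1 A2 B C D E h u v s t)"
    and c: "c = 0" and C: "C = 0"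
  shows "GR R"
  unfolding generically_rational_solution_def
proof (intro exI conjI allI impI)
  let ?N1 = "\<lambda>h u v. k1 h u v * p2 h u v - r1 h u v * k2 h u v"
  let ?N2 = "\<lambda>h u v. p1 h u v * k2 h u v - r2 h u v * k1 h u v"
  let ?Q = "\<lambda>h u v. p1 h u v * p2 h u v - r1 h u v * r2 h u v"
  let ?G = "\<lambda>h u v. h * ?Q h u v"
  show "poly3_fun ?N1" "poly3_fun ?N2" "poly3_fun ?Q" "poly3_fun ?G"
    by (intro poly3_intros poly3_cdefs)+
  obtain h where h: "h \<noteq> 0" "(1 - h * a2) * (1 - h * A2) \<noteq> 0" using gnz_near by blast
  have "?G h 0 0 \<noteq> 0" using h unfolding cdefs by simp
  then show "?G \<noteq> (\<lambda>_ _ _. 0)" by metis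
  fix h u v assume G: "?G h u v \<noteq> 0"
  then show "?Q h u v \<noteq> 0" by simp
  have h0: "h \<noteq> 0" using G by simp
  have "R h u v s t \<longleftrightarrow> (s = ?N1 h u v / ?Q h u v \<and> t = ?N2 h u v / ?Q h u v)" for s t
  proof -
    have q: "q1 h u v = 0" "q2 h u v = 0" unfolding q1_def q2_def using c C by simp_all
    have "R h u v s t \<longleftrightarrow> (s * p1 h u v + r1 h u v * t = k1 h u v \<and> t * p2 h u v + r2 h u v * s = k2 h u v)"
      using eq[OF h0] by (simp add: gsys_R' q)
    also have "\<dots> \<longleftrightarrow> (s = ?N1 h u v / ?Q h u v \<and> t = ?N2 h u v / ?Q h u v)"
      by (rule lin1) (use G in simp)
    finally show ?thesis .
  qed
  then show "{(s, t). R h u v s t} = {(?N1 h u v / ?Q h u v, ?N2 h u v / ?Q h u v)}" by auto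
qed

lemma fwd_ok2:
  assumes eq: "\<And>h u v s t. h \<noteq> 0 \<Longrightarrow> (R h u v s t \<longleftrightarrow> gsys a1 a2 b c d e A1 A2 B C D E h u v s t)"
    and c: "c = 0" and d: "d = 0"
  shows "GR R"
  unfolding generically_rational_solution_def
proof (intro exI conjI allI impI)
  let ?M = "\<lambda>h u v. p1 h u v * p2 h u v + q2 h u v * k1 h u v"
  let ?N1 = "\<lambda>h u v. k1 h u v * ?M h u v"
  let ?N2 = "\<lambda>h u v. p1 h u v * (k2 h u v * p1 h u v - r2 h u v * k1 h u v)"
  let ?Q = "\<lambda>h u v. p1 h u v * ?M h u v"
  let ?G = "\<lambda>h u v. h * ?Q h u v"
  show "poly3_fun ?N1" "poly3_fun ?N2" "poly3_fun ?Q" "poly3_fun ?G"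
    by (intro poly3_intros poly3_cdefs)+
  obtain h where h: "h \<noteq> 0" "(1 - h * a2) * (1 - h * A2) \<noteq> 0" using gnz_near by blast
  have "?G h 0 0 \<noteq> 0" using h unfolding cdefs by simp
  then show "?G \<noteq> (\<lambda>_ _ _. 0)" by metis
  fix h u v assume G: "?G h u v \<noteq> 0"
  then show "?Q h u v \<noteq> 0" by simp
  have h0: "h \<noteq> 0" using G by simp
  have "R h u v s t \<longleftrightarrow> (s = ?N1 h u v / ?Q h u v \<and> t = ?N2 h u v / ?Q h u v)" for s t
  proof -
    have q: "q1 h u v = 0" "r1 h u v = 0" unfolding q1_def r1_def using c d by simp_all
    have "R h u v s t \<longleftrightarrow> (s * p1 h u v = k1 h u v \<and> t * p2 h u v + q2 h u v * s * t + r2 h u v * s = k2 h u v)"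
      using eq[OF h0] by (simp add: gsys_R' q)
    also have "\<dots> \<longleftrightarrow> (s = ?N1 h u v / ?Q h u v \<and> t = ?N2 h u v / ?Q h u v)"
      by (rule lin2) (use G in simp_all)
    finally show ?thesis .
  qed
  then show "{(s, t). R h u v s t} = {(?N1 h u v / ?Q h u v, ?N2 h u v / ?Q h u v)}" by auto
qed

end




lemma fwd_ok3:
  assumes eq: "\<And>h u v s t. h \<noteq> 0 \<Longrightarrow> (R h u v s t \<longleftrightarrow> gsys a1 a2 b c d e A1 A2 B C D E h u v s t)"
    and C: "C = 0" and E: "E = 0"
  shows "GR R"
proof -
  have "GR (\<lambda>h u v s t. R h v u t s)"
    by (rule gpar.fwd_ok2[of _ A1 A2 B C E D a1 a2 b c e d]) (use eq C E gsys_swap in auto)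
  then show ?thesis using gr_swap_iff[of R] by simp
qed

lemma fwd_fail2:
  assumes eq: "\<And>h u v s t. h \<noteq> 0 \<Longrightarrow> (R h u v s t \<longleftrightarrow> gsys a1 a2 b c d e A1 A2 B C D E h u v s t)"
    and C: "C = 0" and c: "c \<noteq> 0" and E: "E \<noteq> 0"
  shows "\<not> GR R"
proof -
  have "\<not> GR (\<lambda>h u v s t. R h v u t s)"
    by (rule gpar.fwd_fail[of _ A1 A2 B C E D a1 a2 b c e d]) (use eq C c E gsys_swap in auto)
  then show ?thesis using gr_swap_iff[of R] by simp
qed

lemma fwd_char:
  assumes eq: "\<And>h u v s t. h \<noteq> 0 \<Longrightarrow> (R h u v s t \<longleftrightarrow> gsys a1 a2 b c d e A1 A2 B C D E h u v s t)"
  shows "GR R \<longleftrightarrow> (c = 0 \<and> C = 0) \<or> (c = 0 \<and> d = 0) \<or> (C = 0 \<and> E = 0)"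
proof
  assume gr: "GR R"
  show "(c = 0 \<and> C = 0) \<or> (c = 0 \<and> d = 0) \<or> (C = 0 \<and> E = 0)"
  proof (rule ccontr)
    assume n: "\<not> ?thesis"
    show False
    proof (cases "C = 0")
      case True
      then show False using fwd_fail2[OF eq True] n gr by blast
    next
      case False
      then show False using gpar.fwd_fail[OF eq False] n gr by blast
    qed
  qed
next
  assume "(c = 0 \<and> C = 0) \<or> (c = 0 \<and> d = 0) \<or> (C = 0 \<and> E = 0)"
  then show "GR R" using gpar.fwd_ok1[OF eq] gpar.fwd_ok2[OF eq] fwd_ok3[OF eq] by blast
qed

lemma final_arith:
  fixes b c d e B C D E :: real
  assumes s1: "b + c + d + e = 1" and s2: "B + C + D + E = 1"
  shows "(((c = 0 \<and> C = 0) \<or> (c = 0 \<and> d = 0) \<or> (C = 0 \<and> E = 0)) \<and>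
         ((b = 0 \<and> B = 0) \<or> (b = 0 \<and> e = 0) \<or> (B = 0 \<and> D = 0))) \<longleftrightarrow>
    ((b = 0 \<and> c = 0 \<and> B = 0 \<and> C = 0 \<and> d + e = 1 \<and> D + E = 1) \<or>
     (b = 0 \<and> c = 0 \<and> d = 1 \<and> e = 0 \<and> C = 0 \<and> B + D + E = 1) \<or>
     (b = 0 \<and> c = 0 \<and> d = 0 \<and> e = 1 \<and> B = 0 \<and> C + D + E = 1) \<or>
     (c = 0 \<and> B = 0 \<and> C = 0 \<and> D = 0 \<and> E = 1 \<and> b + d + e = 1) \<or>
     (b = 0 \<and> B = 0 \<and> C = 0 \<and> D = 1 \<and> E = 0 \<and> c + d + e = 1) \<or>
     (b = 0 \<and> e = 0 \<and> C = 0 \<and> E = 0 \<and> c + d = 1 \<and> B + D = 1) \<or>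
     (c = 0 \<and> d = 0 \<and> B = 0 \<and> D = 0 \<and> b + e = 1 \<and> C + E = 1))" (is "?L \<longleftrightarrow> ?R")
proof
  assume L: ?L
  show ?R using L s1 s2 by (elim conjE disjE) simp_all
next
  assume R: ?R
  show ?L using R by (elim conjE disjE) simp_all
qed

theorem theorem1:
  fixes a b c d e A B C D E :: real
  assumes "b + c + d + e = 1" and "B + C + D + E = 1"
  shows "LV_birational a b c d e A B C D E \<longleftrightarrow>
    ((b = 0 \<and> c = 0 \<and> B = 0 \<and> C = 0 \<and> d + e = 1 \<and> D + E = 1) \<or>
     (b = 0 \<and> c = 0 \<and> d = 1 \<and> e = 0 \<and> C = 0 \<and> B + D + E = 1) \<or>
     (b = 0 \<and> c = 0 \<and> d = 0 \<and> e = 1 \<and> B = 0 \<and> C + D + E = 1) \<or>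
     (c = 0 \<and> B = 0 \<and> C = 0 \<and> D = 0 \<and> E = 1 \<and> b + d + e = 1) \<or>
     (b = 0 \<and> B = 0 \<and> C = 0 \<and> D = 1 \<and> E = 0 \<and> c + d + e = 1) \<or>
     (b = 0 \<and> e = 0 \<and> C = 0 \<and> E = 0 \<and> c + d = 1 \<and> B + D = 1) \<or>
     (c = 0 \<and> d = 0 \<and> B = 0 \<and> D = 0 \<and> b + e = 1 \<and> C + E = 1))"
proof -
  let ?a1 = "complex_of_real a" and ?a2 = "complex_of_real (1-a)"
  let ?b = "- complex_of_real b" and ?c = "- complex_of_real c"
  let ?d = "- complex_of_real d" and ?e = "- complex_of_real e"
  let ?A1 = "- complex_of_real A" and ?A2 = "- complex_of_real (1-A)"
  let ?B = "complex_of_real B" and ?C = "complex_of_real C"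
  let ?D = "complex_of_real D" and ?E = "complex_of_real E"
  have F: "GR (\<lambda>h x y xt yt. LV_sys a b c d e A B C D E h x y xt yt) \<longleftrightarrow>
      (c = 0 \<and> C = 0) \<or> (c = 0 \<and> d = 0) \<or> (C = 0 \<and> E = 0)"
    using fwd_char[of "\<lambda>h x y xt yt. LV_sys a b c d e A B C D E h x y xt yt"
        ?a1 ?a2 ?b ?c ?d ?e ?A1 ?A2 ?B ?C ?D ?E] LV_gsys by simp
  have "GR (\<lambda>h u v s t. LV_sys a b c d e A B C D E (-h) s t u v) \<longleftrightarrow>
      (b = 0 \<and> B = 0) \<or> (b = 0 \<and> e = 0) \<or> (B = 0 \<and> D = 0)"
  proof -
    have eq: "LV_sys a b c d e A B C D E (-h) s t u v \<longleftrightarrow>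
        gsys ?a2 ?a1 ?c ?b ?e ?d ?A2 ?A1 ?C ?B ?E ?D h u v s t" if "h \<noteq> 0" for h u v s t
      using LV_gsys[of "-h" a b c d e A B C D E s t u v] that
        gsys_rev[of ?a1 ?a2 ?b ?c ?d ?e ?A1 ?A2 ?B ?C ?D ?E "-h" s t u v] by simp
    show ?thesis using fwd_char[of "\<lambda>h u v s t. LV_sys a b c d e A B C D E (-h) s t u v", OF eq] by simp
  qed
  then have B: "GR (\<lambda>h xt yt x y. LV_sys a b c d e A B C D E h x y xt yt) \<longleftrightarrow>
      (b = 0 \<and> B = 0) \<or> (b = 0 \<and> e = 0) \<or> (B = 0 \<and> D = 0)"
    using gr_negh_iff[of "\<lambda>h xt yt x y. LV_sys a b c d e A B C D E h x y xt yt"] by simp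
  show ?thesis unfolding LV_birational_def F B by (rule final_arith[OF assms])
qed


end
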